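(* If $2\mu\bar c\le\sigma^2 r$, define $g(x)=\frac{\bar c}{r}(1-e^{-\gamma x})$ for $x\ge0$. If $2\mu\bar c>\sigma^2 r$, then there is a unique $y_0>0$ such that $k_1e^{-\lambda_1y_0}-k_2e^{\lambda_2y_0}+\frac{b\bar c}{r}=0$, and define $$g(x)=\begin{cases}k_1e^{\lambda_1(x-y_0)}-k_2e^{-\lambda_2(x-y_0)}+\frac{b\bar c}{r}, & 0\le x\le y_0,\\[1mm] -\frac1\gamma e^{-\gamma(x-y_0)}+\frac{\bar c}{r}, & x>y_0.\end{cases}$$ In both cases $g\in C^2([0,\infty))$ satisfies $-\mathcal Lg-\bar c\,\mathcal Tg=0$ on $[0,\infty)$ and $g(0)=0$; moreover $0\le g\le \bar c/r$, $0\le g'\le g'(0)<\infty$, and $g'$ is strictly decreasing on $[0,\infty)$ (so $g$ is strictly concave). In the second case $g'(y_0)=1$.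
   Context: Constants: $\mu\in\mathbb R$, $\sigma>0$, $r>0$, $\bar c\in(0,\mu]$, $b\in[0,1]$. Operators: $\mathcal L v=\tfrac12\sigma^2v''+\mu v'-rv$, $\mathcal T v=b(1-v')+(1-b)(1-v')^+$. Parameters: $\gamma=\frac{\sqrt{(\mu-\bar c)^2+2\sigma^2 r}+(\mu-\bar c)}{\sigma^2}$, $\lambda_{1}=\frac{\sqrt{(\mu-b\bar c)^2+2\sigma^2 r}-(\mu-b\bar c)}{\sigma^2}$, $\lambda_{2}=\frac{\sqrt{(\mu-b\bar c)^2+2\sigma^2 r}+(\mu-b\bar c)}{\sigma^2}$, $k_1=\frac{1}{\lambda_1+\lambda_2}\big[1+\lambda_2\big(\frac{(1-b)\bar c}{r}-\frac1\gamma\big)\big]$, $k_2=\frac{1}{\lambda_1+\lambda_2}\big[1-\lambda_1\big(\frac{(1-b)\bar c}{r}-\frac1\gamma\big)\big]$. *)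

theory Defs
  imports "HOL-Analysis.Analysis"
begin

definition gam :: "real \<Rightarrow> real \<Rightarrow> real \<Rightarrow> real \<Rightarrow> real" where
  "gam mu sgm r cbar = (sqrt ((mu - cbar)^2 + 2* sgm^2*r) + (mu - cbar)) / sgm^2"

definition lam1 :: "real \<Rightarrow> real \<Rightarrow> real \<Rightarrow> real \<Rightarrow> real \<Rightarrow> real" where
  "lam1 mu sgm r cbar b = (sqrt ((mu - b*cbar)^2 + 2* sgm^2*r) - (mu - b*cbar)) / sgm^2"

definition lam2 :: "real \<Rightarrow> real \<Rightarrow> real \<Rightarrow> real \<Rightarrow> real \<Rightarrow> real" where
  "lam2 mu sgm r cbar b = (sqrt ((mu - b*cbar)^2 + 2* sgm^2*r) + (mu - b*cbar)) / sgm^2"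

definition kk1 :: "real \<Rightarrow> real \<Rightarrow> real \<Rightarrow> real \<Rightarrow> real \<Rightarrow> real" where
  "kk1 mu sgm r cbar b = (1 / (lam1 mu sgm r cbar b + lam2 mu sgm r cbar b)) *
     (1 + lam2 mu sgm r cbar b * ((1 - b)*cbar/r - 1 / gam mu sgm r cbar))"

definition kk2 :: "real \<Rightarrow> real \<Rightarrow> real \<Rightarrow> real \<Rightarrow> real \<Rightarrow> real" where
  "kk2 mu sgm r cbar b = (1 / (lam1 mu sgm r cbar b + lam2 mu sgm r cbar b)) *
     (1 - lam1 mu sgm r cbar b * ((1 - b)*cbar/r - 1 / gam mu sgm r cbar))"

definition opL :: "real \<Rightarrow> real \<Rightarrow> real \<Rightarrow> real \<Rightarrow> real \<Rightarrow> real \<Rightarrow> real" where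
  "opL mu sgm r v v' v'' = sgm^2/2 * v'' + mu * v' - r * v"

definition opT :: "real \<Rightarrow> real \<Rightarrow> real" where
  "opT b v' = b * (1 - v') + (1 - b) * max 0 (1 - v')"

definition g_case2 :: "real \<Rightarrow> real \<Rightarrow> real \<Rightarrow> real \<Rightarrow> real \<Rightarrow> real \<Rightarrow> real \<Rightarrow> real" where
  "g_case2 mu sgm r cbar b y0 x =
     (if x \<le> y0 then kk1 mu sgm r cbar b * exp (lam1 mu sgm r cbar b * (x - y0))
                      - kk2 mu sgm r cbar b * exp (- lam2 mu sgm r cbar b * (x - y0)) + b*cbar/r
      else - (1 / gam mu sgm r cbar) * exp (- gam mu sgm r cbar * (x - y0)) + cbar / r)"

definition good_sol :: "real \<Rightarrow> real \<Rightarrow> real \<Rightarrow> real \<Rightarrow> real \<Rightarrow>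
    (real \<Rightarrow> real) \<Rightarrow> (real \<Rightarrow> real) \<Rightarrow> (real \<Rightarrow> real) \<Rightarrow> bool" where
  "good_sol mu sgm r cbar b g g' g'' \<longleftrightarrow>
     (\<forall>x\<ge>0. (g has_real_derivative g' x) (at x within {0..})
            \<and> (g' has_real_derivative g'' x) (at x within {0..}))
   \<and> continuous_on {0..} g''
   \<and> (\<forall>x\<ge>0. - opL mu sgm r (g x) (g' x) (g'' x) - cbar * opT b (g' x) = 0)
   \<and> g 0 = 0
   \<and> (\<forall>x\<ge>0. 0 \<le> g x \<and> g x \<le> cbar / r)
   \<and> (\<forall>x\<ge>0. 0 \<le> g' x \<and> g' x \<le> g' 0)
   \<and> (\<forall>x y. 0 \<le> x \<longrightarrow> x < y \<longrightarrow> g' y < g' x)"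

end

theory Submission
  imports Defs
begin


lemma join_deriv:
  fixes f g df dg :: "real \<Rightarrow> real"
  assumes "\<And>x. (f has_real_derivative df x) (at x)" "\<And>x. (g has_real_derivative dg x) (at x)"
    "f a = g a" "df a = dg a"
  shows "((\<lambda>x. if x \<le> a then f x else g x) has_real_derivative (if x \<le> a then df x else dg x)) (at x)"
proof -
  have "((\<lambda>x. if x \<in> {..a} then f x else g x) has_vector_derivative (if x \<in> {..a} then df x else dg x)) (at x within UNIV)"
    apply (rule has_vector_derivative_If_within_closures[where T="{a<..}"])
    using assms by (auto simp: has_real_derivative_iff_has_vector_derivative[symmetric] intro: has_field_derivative_at_within)
  then show ?thesis by (simp add: has_real_derivative_iff_has_vector_derivative)
qed

lemma quadroots:
  fixes a w r :: real
  assumes w: "w > 0" and r: "r > 0"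
  defines "s \<equiv> sqrt (a^2 + 2*w^2*r)"
  defines "p \<equiv> (s + a)/w^2" and "q \<equiv> (s - a)/w^2"
  shows "p > 0" "q > 0" "w^2/2*p^2 - a*p - r = 0" "w^2/2*q^2 + a*q - r = 0"
    "p*q = 2*r/w^2" "q - p = -2*a/w^2"
proof -
  have s2: "s^2 = a^2 + 2*w^2*r" unfolding s_def using w r by (simp add: add_nonneg_nonneg)
  have "sqrt (a^2) < s" unfolding s_def using w r by (intro real_sqrt_less_mono) simp
  then have sa: "\<bar>a\<bar> < s" by simp
  show "p > 0" "q > 0" unfolding p_def q_def using sa w by auto
  show "w^2/2*p^2 - a*p - r = 0" unfolding p_def using w s2
    by (simp add: field_simps power2_eq_square; simp add: algebra_simps power2_eq_square)
  show "w^2/2*q^2 + a*q - r = 0" unfolding q_def using w s2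
    by (simp add: field_simps power2_eq_square; simp add: algebra_simps power2_eq_square)
  show "p*q = 2*r/w^2" unfolding p_def q_def using w s2
    by (simp add: field_simps power2_eq_square; simp add: algebra_simps power2_eq_square)
  show "q - p = -2*a/w^2" unfolding p_def q_def using w
    by (simp add: field_simps)
qed


theorem lemma3p3:
  fixes mu sgm r cbar b :: real
  assumes "sgm > 0" and "r > 0" and "0 < cbar" and "cbar \<le> mu" and "0 \<le> b" and "b \<le> 1"
  shows "(2*mu*cbar \<le> sgm^2*r \<longrightarrow>
            (\<exists>g' g''. good_sol mu sgm r cbar b
                (\<lambda>x. cbar / r * (1 - exp (- gam mu sgm r cbar * x))) g' g''))
       \<and> (2*mu*cbar > sgm^2*r \<longrightarrow>
            (\<exists>!y0. y0 > 0 \<and> kk1 mu sgm r cbar b * exp (- lam1 mu sgm r cbar b * y0)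
                     - kk2 mu sgm r cbar b * exp (lam2 mu sgm r cbar b * y0) + b*cbar/r = 0)
          \<and> (\<forall>y0. y0 > 0 \<and> kk1 mu sgm r cbar b * exp (- lam1 mu sgm r cbar b * y0)
                     - kk2 mu sgm r cbar b * exp (lam2 mu sgm r cbar b * y0) + b*cbar/r = 0
                \<longrightarrow> (\<exists>g' g''. good_sol mu sgm r cbar b (g_case2 mu sgm r cbar b y0) g' g''
                               \<and> g' y0 = 1)))"
  
proof -
  define a0 where "a0 = mu - cbar"
  define a1 where "a1 = mu - b*cbar"
  define gm where "gm = gam mu sgm r cbar"
  define l1 where "l1 = lam1 mu sgm r cbar b"
  define l2 where "l2 = lam2 mu sgm r cbar b"
  define k1 where "k1 = kk1 mu sgm r cbar b"
  define k2 where "k2 = kk2 mu sgm r cbar b"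
  define q0 where "q0 = (sqrt (a0^2 + 2* sgm^2*r) - a0)/sgm^2"
  have sg: "sgm > 0" and rp: "r > 0" and cp: "cbar > 0" using assms by auto
  have gm_eq: "gm = (sqrt (a0^2 + 2* sgm^2*r) + a0)/sgm^2" by (simp add: gm_def gam_def a0_def)
  have l1_eq: "l1 = (sqrt (a1^2 + 2* sgm^2*r) - a1)/sgm^2" by (simp add: l1_def lam1_def a1_def)
  have l2_eq: "l2 = (sqrt (a1^2 + 2* sgm^2*r) + a1)/sgm^2" by (simp add: l2_def lam2_def a1_def)
  have gmpos: "gm > 0" and gmq: "sgm^2/2*gm^2 - a0*gm - r = 0" and q0pos: "q0 > 0"
    and gq: "gm*q0 = 2*r/sgm^2" and qg: "q0 - gm = -2*a0/sgm^2"
    using quadroots[OF sg rp, of a0] unfolding gm_eq q0_def by auto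
  have l2pos: "l2 > 0" and l2q: "sgm^2/2*l2^2 - a1*l2 - r = 0" and l1pos: "l1 > 0"
    and l1q: "sgm^2/2*l1^2 + a1*l1 - r = 0"
    and l21: "l2*l1 = 2*r/sgm^2" and l12: "l1 - l2 = -2*a1/sgm^2"
    using quadroots[OF sg rp, of a1] unfolding l1_eq l2_eq by auto
  have rg: "r/gm = sgm^2/2*gm - a0"
    using gmq gmpos by (simp add: field_simps power2_eq_square)
  have phi: "sgm^2/2*(r/cbar - gm)*(r/cbar + q0) = r/(2*cbar^2)*(sgm^2*r - 2*cbar*mu)"
  proof -
    have "sgm^2/2*(r/cbar - gm)*(r/cbar + q0) = sgm^2/2*(r/cbar)^2 + sgm^2/2*(q0-gm)*(r/cbar) - sgm^2/2*(gm*q0)"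
      using cp by (simp add: field_simps power2_eq_square)
    also have "\<dots> = sgm^2/2*(r/cbar)^2 - a0*(r/cbar) - r"
      unfolding gq qg using sg by (simp add: field_simps)
    also have "\<dots> = r/(2*cbar^2)*(sgm^2*r - 2*cbar*mu)"
      using cp by (simp add: a0_def field_simps power2_eq_square)
    finally show ?thesis .
  qed
  have part1: "2*mu*cbar \<le> sgm^2*r \<longrightarrow>
            (\<exists>g' g''. good_sol mu sgm r cbar b
                (\<lambda>x. cbar / r * (1 - exp (- gam mu sgm r cbar * x))) g' g'')"
  proof
    assume h: "2*mu*cbar \<le> sgm^2*r"
    have "0 \<le> sgm^2/2*(r/cbar - gm)*(r/cbar + q0)" unfolding phi using h rp cp by (intro mult_nonneg_nonneg) (auto simp: mult_ac)
    moreover have "0 < sgm^2/2*(r/cbar + q0)" using sg rp cp q0pos by (simp add: add_pos_pos)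
    ultimately have "0 \<le> r/cbar - gm"
      by (metis (no_types, lifting) mult.assoc mult.commute zero_le_mult_iff not_le)
    then have cg: "cbar/r*gm \<le> 1" using cp rp by (simp add: field_simps)
    define g' where "g' = (\<lambda>x::real. cbar/r*gm*exp(-gm*x))"
    define g'' where "g'' = (\<lambda>x::real. -(cbar/r*gm^2)*exp(-gm*x))"
    have d1: "((\<lambda>x. cbar / r * (1 - exp (- gm * x))) has_real_derivative g' x) (at x)" for x
      unfolding g'_def using rp by (auto intro!: derivative_eq_intros)
    have d2: "(g' has_real_derivative g'' x) (at x)" for x
      unfolding g'_def g''_def using rp by (auto intro!: derivative_eq_intros simp: power2_eq_square)
    have ode: "- opL mu sgm r (cbar / r * (1 - exp (- gm * x))) (g' x) (g'' x) - cbar * opT b (g' x) = 0"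
      if "x \<ge> 0" for x
    proof -
      have "exp (-gm*x) \<le> 1" using that gmpos by simp
      then have "g' x \<le> 1" unfolding g'_def using cg cp rp gmpos
        by (metis mult_left_le mult_nonneg_nonneg less_imp_le divide_pos_pos exp_ge_zero order_trans)
      then have T: "opT b (g' x) = 1 - g' x" unfolding opT_def by (simp add: algebra_simps)
      have "- opL mu sgm r (cbar / r * (1 - exp (- gm * x))) (g' x) (g'' x) - cbar * (1 - g' x)
           = cbar/r*exp(-gm*x)*(sgm^2/2*gm^2 - a0*gm - r)"
        unfolding opL_def g'_def g''_def a0_def using rp by (simp add: field_simps)
      then show ?thesis unfolding T gmq by simp
    qed
    have "good_sol mu sgm r cbar b (\<lambda>x. cbar / r * (1 - exp (- gm * x))) g' g''"
      unfolding good_sol_def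
    proof (intro conjI allI impI)
      fix x :: real assume "0 \<le> x"
      show "((\<lambda>x. cbar / r * (1 - exp (- gm * x))) has_real_derivative g' x) (at x within {0..})"
        using d1 by (rule has_field_derivative_at_within)
      show "(g' has_real_derivative g'' x) (at x within {0..})"
        using d2 by (rule has_field_derivative_at_within)
      show "- opL mu sgm r (cbar / r * (1 - exp (- gm * x))) (g' x) (g'' x) - cbar * opT b (g' x) = 0"
        using ode \<open>0 \<le> x\<close> by blast
      have "exp (-gm*x) \<le> 1" using \<open>0 \<le> x\<close> gmpos by simp
      then show "0 \<le> cbar / r * (1 - exp (- gm * x))" using cp rp by simp
      show "cbar / r * (1 - exp (- gm * x)) \<le> cbar / r" using cp rp by (simp add: field_simps)
      show "0 \<le> g' x" unfolding g'_def using cp rp gmpos by simp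
      have "cbar/r*gm*exp(-gm*x) \<le> cbar/r*gm*1"
        using cp rp gmpos \<open>exp (-gm*x) \<le> 1\<close> by (intro mult_left_mono) auto
      then show "g' x \<le> g' 0" unfolding g'_def by simp
    next
      show "continuous_on {0..} g''" unfolding g''_def by (intro continuous_intros)
    next
      show "(\<lambda>x. cbar / r * (1 - exp (- gm * x))) 0 = 0" by simp
    next
      fix x y :: real assume "0 \<le> x" "x < y"
      then have "exp(-gm*y) < exp(-gm*x)" using gmpos by simp
      then have "cbar/r*gm*exp(-gm*y) < cbar/r*gm*exp(-gm*x)"
        using cp rp gmpos by (intro mult_strict_left_mono) auto
      then show "g' y < g' x" unfolding g'_def by simp
    qed
    then show "\<exists>g' g''. good_sol mu sgm r cbar b
                (\<lambda>x. cbar / r * (1 - exp (- gam mu sgm r cbar * x))) g' g''"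
      unfolding gm_def by blast
  qed

  have part2: "2*mu*cbar > sgm^2*r \<longrightarrow>
            (\<exists>!y0. y0 > 0 \<and> kk1 mu sgm r cbar b * exp (- lam1 mu sgm r cbar b * y0)
                     - kk2 mu sgm r cbar b * exp (lam2 mu sgm r cbar b * y0) + b*cbar/r = 0)
          \<and> (\<forall>y0. y0 > 0 \<and> kk1 mu sgm r cbar b * exp (- lam1 mu sgm r cbar b * y0)
                     - kk2 mu sgm r cbar b * exp (lam2 mu sgm r cbar b * y0) + b*cbar/r = 0
                \<longrightarrow> (\<exists>g' g''. good_sol mu sgm r cbar b (g_case2 mu sgm r cbar b y0) g' g''
                               \<and> g' y0 = 1))" (is "_ \<longrightarrow> ?B \<and> ?C")
  proof
    assume h: "2*mu*cbar > sgm^2*r"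
    have "sgm^2/2*(r/cbar - gm)*(r/cbar + q0) < 0" unfolding phi using h rp cp
      by (intro mult_pos_neg) (auto simp: mult_ac)
    moreover have "0 < sgm^2/2*(r/cbar + q0)" using sg rp cp q0pos by (simp add: add_pos_pos)
    moreover have "sgm^2/2*(r/cbar - gm)*(r/cbar + q0) = (sgm^2/2*(r/cbar + q0))*(r/cbar - gm)"
      by (simp only: mult.assoc mult.commute[of "r/cbar - gm"])
    ultimately have "r/cbar - gm < 0"
      using mult_less_0_iff[of "sgm^2/2*(r/cbar + q0)" "r/cbar - gm"] by (simp only:) linarith
    then have cg: "cbar/r - 1/gm > 0" using cp rp gmpos by (simp add: field_simps)
    define A where "A = (1-b)*cbar/r - 1/gm"
    have k1_eq: "k1 = (1/(l1+l2))*(1 + l2*A)" by (simp add: k1_def kk1_def A_def l1_def l2_def gm_def)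
    have k2_eq: "k2 = (1/(l1+l2))*(1 - l1*A)" by (simp add: k2_def kk2_def A_def l1_def l2_def gm_def)
    have lsum: "l1 + l2 > 0" using l1pos l2pos by simp
    define D where "D = l1 + l2"
    have Dpos: "D > 0" using lsum D_def by simp
    have k1D: "k1 = (1 + l2*A)/D" unfolding k1_eq D_def by simp
    have k2D: "k2 = (1 - l1*A)/D" unfolding k2_eq D_def by simp
    have kd: "k1 - k2 = A"
    proof -
      have "k1 - k2 = ((1 + l2*A) - (1 - l1*A))/D" unfolding k1D k2D by (rule diff_divide_distrib[symmetric])
      also have "(1 + l2*A) - (1 - l1*A) = D*A" unfolding D_def by (simp add: algebra_simps)
      finally show ?thesis using Dpos by simp
    qed
    have kl: "k1*l1 + k2*l2 = 1"
    proof -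
      have "k1*l1 + k2*l2 = ((1 + l2*A)*l1 + (1 - l1*A)*l2)/D" unfolding k1D k2D using Dpos
        by (simp add: field_simps)
      also have "(1 + l2*A)*l1 + (1 - l1*A)*l2 = D" unfolding D_def by (simp add: algebra_simps)
      finally show ?thesis using Dpos by simp
    qed
    have kl2: "k1*l1^2 - k2*l2^2 = -gm"
    proof -
      have "k1*l1^2 - k2*l2^2 = ((1 + l2*A)*l1^2 - (1 - l1*A)*l2^2)/D" unfolding k1D k2D using Dpos
        by (simp add: field_simps)
      also have "(1 + l2*A)*l1^2 - (1 - l1*A)*l2^2 = D*((l1 - l2) + (l2*l1)*A)" unfolding D_def
        by (simp add: algebra_simps power2_eq_square)
      also have "(l1 - l2) + (l2*l1)*A = 2/sgm^2*(-a0 - r/gm)"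
        unfolding l12 l21 A_def a0_def a1_def using sg rp by (simp add: field_simps)
      also have "2/sgm^2*(-a0 - r/gm) = -gm" unfolding rg using sg by (simp add: field_simps)
      finally show ?thesis using Dpos by simp
    qed
    have k2pos: "k2 > 0"
    proof (rule ccontr)
      assume "\<not> k2 > 0"
      then have "k2*l2 \<le> 0" "k2*l2^2 \<le> 0" using l2pos by (auto simp: mult_nonpos_nonneg)
      then have "k1*l1 \<ge> 1" using kl by linarith
      then have "k1 > 0" using l1pos by (smt (verit) mult_nonpos_nonneg)
      then have "k1*l1^2 > 0" using l1pos by simp
      then show False using kl2 gmpos \<open>k2*l2^2 \<le> 0\<close> by linarith
    qed
    define G where "G = (\<lambda>t. k1*exp(l1*t) - k2*exp(-l2*t) + b*cbar/r)"
    define H where "H = (\<lambda>t. k1*l1*exp(l1*t) + k2*l2*exp(-l2*t))"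
    define H2 where "H2 = (\<lambda>t. k1*l1^2*exp(l1*t) - k2*l2^2*exp(-l2*t))"
    have dG: "(G has_real_derivative H t) (at t)" for t
      unfolding G_def H_def by (auto intro!: derivative_eq_intros simp: algebra_simps)
    have dH: "(H has_real_derivative H2 t) (at t)" for t
      unfolding H2_def H_def by (auto intro!: derivative_eq_intros simp: algebra_simps power2_eq_square)
    have H0: "H 0 = 1" unfolding H_def using kl by simp
    have H20: "H2 0 = -gm" unfolding H2_def using kl2 by simp
    have G0: "G 0 = cbar/r - 1/gm" unfolding G_def using kd A_def rp by (simp add: field_simps)
    have H2neg: "H2 t < 0" if "t \<le> 0" for t
    proof (cases "k1 \<ge> 0")
      case True
      have "exp(l1*t) \<le> 1" using that l1pos by (simp add: mult_nonneg_nonpos)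
      then have a: "k1*l1^2*exp(l1*t) \<le> k1*l1^2" using True by (simp add: mult_left_le)
      have "exp(-l2*t) \<ge> 1" using that l2pos by (simp add: mult_nonneg_nonpos)
      then have b: "k2*l2^2*exp(-l2*t) \<ge> k2*l2^2" using mult_left_mono[of 1 "exp(-l2*t)" "k2*l2^2"] k2pos by simp
      show ?thesis unfolding H2_def using a b kl2 gmpos by linarith
    next
      case False
      then have "k1*l1^2*exp(l1*t) < 0" using l1pos by (simp add: mult_neg_pos)
      moreover have "k2*l2^2*exp(-l2*t) > 0" using k2pos l2pos by simp
      ultimately show ?thesis unfolding H2_def by linarith
    qed
    have Hdec: "H t < H s" if "s < t" "t \<le> 0" for s t
      using that by (intro DERIV_neg_imp_decreasing[of s t H]) (auto intro!: dH H2neg exI[of _ "H2 _"])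
    have Hge: "H t \<ge> 1" if "t \<le> 0" for t
      using Hdec[of t 0] that H0 by (cases "t = 0") auto
    have Ginc: "G s < G t" if "s < t" "t \<le> 0" for s t
      using that by (intro DERIV_pos_imp_increasing[of s t G])
        (auto intro!: dG exI[of _ "H _"] order.strict_trans2[OF zero_less_one Hge])
    have Feq: "kk1 mu sgm r cbar b * exp (- lam1 mu sgm r cbar b * y)
                     - kk2 mu sgm r cbar b * exp (lam2 mu sgm r cbar b * y) + b*cbar/r = G (-y)" for y
      unfolding G_def k1_def k2_def l1_def l2_def by simp
    have contG: "isCont G t" for t using dG by (rule DERIV_isCont)
    have P2a: "(\<exists>!y0. y0 > 0 \<and> kk1 mu sgm r cbar b * exp (- lam1 mu sgm r cbar b * y0)
                     - kk2 mu sgm r cbar b * exp (lam2 mu sgm r cbar b * y0) + b*cbar/r = 0)"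
      unfolding Feq
    proof -
      have EX: "\<exists>y. y > 0 \<and> G (-y) = 0"
      proof -
      define Y where "Y = G 0 + 1"
      have Ypos: "Y > 0" unfolding Y_def G0 using cg by simp
      obtain z where z: "z > -Y" "z < 0" "G 0 - G (-Y) = (0 - -Y) * H z"
        using MVT2[of "-Y" 0 G H] Ypos dG by auto
      have "H z \<ge> 1" using Hge z by simp
      then have "G 0 - G (-Y) \<ge> Y" using z Ypos by (simp add: mult_le_cancel_left1)
      then have GY: "G (-Y) \<le> 0" unfolding Y_def by simp
      have "\<exists>y. 0 \<le> y \<and> y \<le> Y \<and> (\<lambda>y. G (-y)) y = 0"
        by (rule IVT2) (use GY G0 cg Ypos in \<open>auto intro!: continuous_intros contG
              isCont_o2[OF _ contG]\<close>)
      then obtain y where y: "0 \<le> y" "G (-y) = 0" by auto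
      have "y \<noteq> 0" using y G0 cg by auto
      then show "\<exists>y. y > 0 \<and> G (-y) = 0" using y by (intro exI[of _ y]) auto
      qed
      have UN: "y1 = y2" if h1: "y1 > 0 \<and> G (-y1) = 0" and h2: "y2 > 0 \<and> G (-y2) = 0" for y1 y2
      proof (rule ccontr)
        assume "y1 \<noteq> y2"
        then consider "y1 < y2" | "y2 < y1" by linarith
        then show False
        proof cases
          case 1 then show False using Ginc[of "-y2" "-y1"] h1 h2 by auto
        next
          case 2 then show False using Ginc[of "-y1" "-y2"] h1 h2 by auto
        qed
      qed
      show "\<exists>!y. y > 0 \<and> G (-y) = 0" by (rule ex_ex1I[OF EX UN])
    qed
    have P2b: "\<forall>y0. y0 > 0 \<and> kk1 mu sgm r cbar b * exp (- lam1 mu sgm r cbar b * y0)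
                     - kk2 mu sgm r cbar b * exp (lam2 mu sgm r cbar b * y0) + b*cbar/r = 0
                \<longrightarrow> (\<exists>g' g''. good_sol mu sgm r cbar b (g_case2 mu sgm r cbar b y0) g' g''
                               \<and> g' y0 = 1)"
    proof (intro allI impI)
      fix y0 assume hy: "y0 > 0 \<and> kk1 mu sgm r cbar b * exp (- lam1 mu sgm r cbar b * y0)
                     - kk2 mu sgm r cbar b * exp (lam2 mu sgm r cbar b * y0) + b*cbar/r = 0"
      then have y0p: "y0 > 0" and Gy0: "G (-y0) = 0" unfolding Feq by auto
      define G2 where "G2 = (\<lambda>t. -(1/gm)*exp(-gm*t) + cbar/r)"
      define g where "g = (\<lambda>x. if x \<le> y0 then G (x - y0) else G2 (x - y0))"
      define g' where "g' = (\<lambda>x. if x \<le> y0 then H (x - y0) else exp(-gm*(x - y0)))"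
      define g'' where "g'' = (\<lambda>x. if x \<le> y0 then H2 (x - y0) else -gm*exp(-gm*(x - y0)))"
      have geq: "g_case2 mu sgm r cbar b y0 = g"
        unfolding g_def G_def G2_def g_case2_def k1_def k2_def l1_def l2_def gm_def by (rule ext) simp
      have dg: "(g has_real_derivative g' x) (at x)" for x
        unfolding g_def g'_def
      proof (rule join_deriv)
        show "((\<lambda>x. G (x - y0)) has_real_derivative H (x - y0)) (at x)" for x
          proof -
          have "((\<lambda>x. x - y0) has_real_derivative 1) (at x)" by (auto intro!: derivative_eq_intros)
          from DERIV_chain2[OF dG this] show ?thesis by simp
        qed
        show "((\<lambda>x. G2 (x - y0)) has_real_derivative exp(-gm*(x - y0))) (at x)" for x
          unfolding G2_def using gmpos by (auto intro!: derivative_eq_intros)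
        show "G (y0 - y0) = G2 (y0 - y0)" using G0 unfolding G2_def by simp
        show "H (y0 - y0) = exp (- gm * (y0 - y0))" using H0 by simp
      qed
      have dg': "(g' has_real_derivative g'' x) (at x)" for x
        unfolding g''_def g'_def
      proof (rule join_deriv)
        show "((\<lambda>x. H (x - y0)) has_real_derivative H2 (x - y0)) (at x)" for x
          proof -
          have "((\<lambda>x. x - y0) has_real_derivative 1) (at x)" by (auto intro!: derivative_eq_intros)
          from DERIV_chain2[OF dH this] show ?thesis by simp
        qed
        show "((\<lambda>x. exp(-gm*(x - y0))) has_real_derivative -gm*exp(-gm*(x - y0))) (at x)" for x
          by (auto intro!: derivative_eq_intros)
        show "H (y0 - y0) = exp (- gm * (y0 - y0))" using H0 by simp
        show "H2 (y0 - y0) = - gm * exp (- gm * (y0 - y0))" using H20 by simp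
      qed
      have g'pos: "g' x > 0" for x
        unfolding g'_def using Hge[of "x - y0"] by auto
      have g'dec: "g' y < g' x" if "x < y" for x y
      proof -
        consider "y \<le> y0" | "x \<le> y0" "y > y0" | "x > y0" using \<open>x < y\<close> by linarith
        then show ?thesis
        proof cases
          case 1 then show ?thesis unfolding g'_def using Hdec[of "x - y0" "y - y0"] that by auto
        next
          case 2
          have "exp(-gm*(y - y0)) < 1" using 2 gmpos by simp
          moreover have "g' y = exp(-gm*(y - y0))" "g' x = H (x - y0)" unfolding g'_def using 2 by auto
          ultimately show ?thesis using Hge[of "x - y0"] 2 by linarith
        next
          case 3 then show ?thesis unfolding g'_def using that gmpos by auto
        qed
      qed
      have g0: "g 0 = 0" unfolding g_def using y0p Gy0 by simp
      have ginc: "g x < g y" if "x < y" for x y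
        using that by (intro DERIV_pos_imp_increasing[of x y g]) (auto intro!: dg g'pos exI[of _ "g' _"])
      have gy0: "g y0 = cbar/r - 1/gm" unfolding g_def using G0 by simp
      have "good_sol mu sgm r cbar b g g' g''"
        unfolding good_sol_def
      proof (intro conjI allI impI)
        fix x :: real assume x0: "0 \<le> x"
        show "(g has_real_derivative g' x) (at x within {0..})"
          using dg by (rule has_field_derivative_at_within)
        show "(g' has_real_derivative g'' x) (at x within {0..})"
          using dg' by (rule has_field_derivative_at_within)
        show "0 \<le> g x" using ginc[of 0 x] g0 x0 by (cases "x = 0") auto
        show "g x \<le> cbar / r"
        proof (cases "x \<le> y0")
          case True
          then have "g x \<le> g y0" using ginc[of x y0] by (cases "x = y0") auto
          then show ?thesis unfolding gy0 using gmpos by (smt (verit) divide_pos_pos)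
        next
          case False then show ?thesis unfolding g_def G2_def using gmpos by simp
        qed
        show "0 \<le> g' x" using g'pos[of x] by simp
        show "g' x \<le> g' 0" using g'dec[of 0 x] x0 by (cases "x = 0") auto
        show "- opL mu sgm r (g x) (g' x) (g'' x) - cbar * opT b (g' x) = 0"
        proof (cases "x \<le> y0")
          case True
          define t where "t = x - y0"
          define E1 where "E1 = exp(l1*t)"
          define E2 where "E2 = exp(-l2*t)"
          have e2: "exp (- (l2 * t)) = E2" unfolding E2_def by simp
          have "g' x \<ge> 1" unfolding g'_def using True Hge[of "x - y0"] by simp
          then have T: "opT b (g' x) = b*(1 - g' x)" unfolding opT_def by simp
          have "- opL mu sgm r (g x) (g' x) (g'' x) - cbar * (b*(1 - g' x))
              = - k1*E1*(sgm^2/2*l1^2 + a1*l1 - r) + k2*E2*(sgm^2/2*l2^2 - a1*l2 - r)"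
            unfolding opL_def g_def g'_def g''_def G_def H_def H2_def using True rp
            by (simp add: t_def[symmetric] E1_def[symmetric] E2_def[symmetric] e2 a1_def field_simps)
          then show ?thesis unfolding T l1q l2q by simp
        next
          case False
          define E where "E = exp(-gm*(x - y0))"
          have "E < 1" unfolding E_def using False gmpos by simp
          then have T: "opT b (g' x) = 1 - g' x" unfolding opT_def g'_def using False E_def
            by (simp add: algebra_simps)
          have "- opL mu sgm r (g x) (g' x) (g'' x) - cbar * (1 - g' x)
              = E*(sgm^2/2*gm - a0 - r/gm)"
          proof -
            have v: "g x = -(1/gm)*E + cbar/r" "g' x = E" "g'' x = -gm*E"
              unfolding g_def g'_def g''_def G2_def E_def using False by auto
            show ?thesis unfolding opL_def v using rp gmpos by (simp add: a0_def field_simps)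
          qed
          then show ?thesis unfolding T rg by simp
        qed
      next
        show "continuous_on {0..} g''" unfolding g''_def
          by (rule continuous_on_cases_le)
            (auto intro!: continuous_intros DERIV_isCont[OF dH] continuous_at_imp_continuous_on
                  simp: H20 H2_def kl2)
      next
        show "g 0 = 0" by (rule g0)
      next
        fix x y :: real assume "0 \<le> x" "x < y"
        then show "g' y < g' x" using g'dec by blast
      qed
      moreover have "g' y0 = 1" unfolding g'_def using H0 by simp
      ultimately show "\<exists>g' g''. good_sol mu sgm r cbar b (g_case2 mu sgm r cbar b y0) g' g''
                               \<and> g' y0 = 1" unfolding geq by blast
    qed
    show "?B \<and> ?C" by (rule conjI[OF P2a P2b])
  qed
  show ?thesis by (rule conjI[OF part1 part2])
qed

end
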